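(* Let $\beta\ge 1$ and let $R=(S^0,\dots,S^T)$ be a $\beta$-bounded $T$-covering in a congestion game in which every delay function is $f(x)=x$, and assume $\mathrm{OPT}>0$. Then $$\frac{\rho(R)}{\mathrm{OPT}}\le 2\,\frac{H(R)}{\mathrm{OPT}}+4\beta+1.$$
   Context: A congestion game has players $N=\{1,\dots,n\}$, a finite resource set $E$ and strategy sets $\Sigma_i\subseteq 2^E$. For a profile $S=(s_1,\dots,s_n)$, $n_e(S)=|\{i: e\in s_i\}|$. Here all delays are $f(x)=x$, so the cost of player $i$ is $c_i(S)=\sum_{e\in s_i}n_e(S)$ and the social cost is $C(S)=\sum_i c_i(S)=\sum_{e\in E}n_e(S)^2$. Fix an optimal profile $S^*=(s_1^*,\dots,s_n^* )$ minimizing $C$ and write $\mathrm{OPT}=C(S^* )$. A best response of player $i$ in $S$ is a strategy $s_i^b\in\Sigma_i$ minimizing $c_i(S_{-i},\cdot)$ over $\Sigma_i$ (where $(S_{-i},s_i')$ replaces $s_i$ by $s_i'$); if no strategy strictly decreases $i$'s cost, the best response is $s_i$ itself. A $T$-covering is a sequence of profiles $R=(S^0,\dots,S^T)$ together with players $\pi(1),\dots,\pi(T)$ such that for each $1\le t\le T$, $S^t=(S^{t-1}_{-\pi(t)},s')$ where $s'$ is a best response of $\pi(t)$ in $S^{t-1}$, and every player of $N$ occurs at least once among $\pi(1),\dots,\pi(T)$. It is $\beta$-bounded if every player occurs at most $\beta$ times among $\pi(1),\dots,\pi(T)$. For each player $i$, $\mathrm{last}(i)=\max\{t:\pi(t)=i\}$.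 Define $\rho(R)=\sum_{i=1}^n\sum_{e\in s_i^*}\bigl(n_e(S^{\mathrm{last}(i)-1})+1\bigr)$ and $H(R)=\sum_{i=1}^n\sum_{e\in s_i^*}n_e(S^0)=\sum_{e\in E}n_e(S^0)\,n_e(S^* )$. *)

theory Defs
  imports Complex_Main
begin

text \<open>Congestion games with linear delays f(x) = x. Players are the naturals 1..n,
  resources are of an arbitrary type 'e, a profile is a function from players to
  strategies (sets of resources).\<close>

definition players :: "nat \<Rightarrow> nat set" where
  "players n = {1..n}"

definition load :: "nat \<Rightarrow> (nat \<Rightarrow> 'e set) \<Rightarrow> 'e \<Rightarrow> nat" where
  "load n S e = card {i \<in> players n. e \<in> S i}"

definition cost :: "nat \<Rightarrow> (nat \<Rightarrow> 'e set) \<Rightarrow> nat \<Rightarrow> nat" where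
  "cost n S i = (\<Sum>e\<in>S i. load n S e)"

definition social_cost :: "nat \<Rightarrow> (nat \<Rightarrow> 'e set) \<Rightarrow> nat" where
  "social_cost n S = (\<Sum>i\<in>players n. cost n S i)"

definition congestion_game :: "'e set \<Rightarrow> nat \<Rightarrow> (nat \<Rightarrow> 'e set set) \<Rightarrow> bool" where
  "congestion_game E n \<Sigma> \<longleftrightarrow> finite E \<and> (\<forall>i\<in>players n. \<Sigma> i \<noteq> {} \<and> \<Sigma> i \<subseteq> Pow E)"

definition valid_profile :: "nat \<Rightarrow> (nat \<Rightarrow> 'e set set) \<Rightarrow> (nat \<Rightarrow> 'e set) \<Rightarrow> bool" where
  "valid_profile n \<Sigma> S \<longleftrightarrow> (\<forall>i\<in>players n. S i \<in> \<Sigma> i)"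

definition optimal_profile :: "nat \<Rightarrow> (nat \<Rightarrow> 'e set set) \<Rightarrow> (nat \<Rightarrow> 'e set) \<Rightarrow> bool" where
  "optimal_profile n \<Sigma> S \<longleftrightarrow> valid_profile n \<Sigma> S \<and>
     (\<forall>S'. valid_profile n \<Sigma> S' \<longrightarrow> social_cost n S \<le> social_cost n S')"

definition best_response :: "nat \<Rightarrow> (nat \<Rightarrow> 'e set set) \<Rightarrow> (nat \<Rightarrow> 'e set) \<Rightarrow> nat \<Rightarrow> 'e set \<Rightarrow> bool" where
  "best_response n \<Sigma> S i s' \<longleftrightarrow> s' \<in> \<Sigma> i \<and>
     (\<forall>s''\<in>\<Sigma> i. cost n (S(i := s')) i \<le> cost n (S(i := s'')) i) \<and>
     ((\<forall>s''\<in>\<Sigma> i. cost n S i \<le> cost n (S(i := s'')) i) \<longrightarrow> s' = S i)"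

text \<open>R = (Sq 0, ..., Sq T) with players \<pi> 1, ..., \<pi> T is a T-covering.\<close>
definition covering :: "nat \<Rightarrow> (nat \<Rightarrow> 'e set set) \<Rightarrow> nat \<Rightarrow> (nat \<Rightarrow> nat \<Rightarrow> 'e set) \<Rightarrow> (nat \<Rightarrow> nat) \<Rightarrow> bool" where
  "covering n \<Sigma> T Sq \<pi> \<longleftrightarrow> valid_profile n \<Sigma> (Sq 0) \<and>
     (\<forall>t\<in>{1..T}. \<pi> t \<in> players n \<and>
        (\<exists>s'. best_response n \<Sigma> (Sq (t - 1)) (\<pi> t) s' \<and> Sq t = (Sq (t - 1))(\<pi> t := s'))) \<and>
     (\<forall>i\<in>players n. \<exists>t\<in>{1..T}. \<pi> t = i)"

definition bounded_covering :: "nat \<Rightarrow> nat \<Rightarrow> (nat \<Rightarrow> nat) \<Rightarrow> bool" where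
  "bounded_covering \<beta> T \<pi> \<longleftrightarrow> (\<forall>i. card {t\<in>{1..T}. \<pi> t = i} \<le> \<beta>)"

definition last_move :: "nat \<Rightarrow> (nat \<Rightarrow> nat) \<Rightarrow> nat \<Rightarrow> nat" where
  "last_move T \<pi> i = Max {t\<in>{1..T}. \<pi> t = i}"

definition rho :: "nat \<Rightarrow> nat \<Rightarrow> (nat \<Rightarrow> nat \<Rightarrow> 'e set) \<Rightarrow> (nat \<Rightarrow> nat) \<Rightarrow> (nat \<Rightarrow> 'e set) \<Rightarrow> nat" where
  "rho n T Sq \<pi> Sstar =
     (\<Sum>i\<in>players n. \<Sum>e\<in>Sstar i. load n (Sq (last_move T \<pi> i - 1)) e + 1)"

definition H :: "nat \<Rightarrow> (nat \<Rightarrow> nat \<Rightarrow> 'e set) \<Rightarrow> (nat \<Rightarrow> 'e set) \<Rightarrow> nat" where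
  "H n Sq Sstar = (\<Sum>i\<in>players n. \<Sum>e\<in>Sstar i. load n (Sq 0) e)"

end

theory Submission imports Defs "HOL-Analysis.Analysis" begin

lemma finite_players[simp]: "finite (players n)" by (simp add: players_def)

lemma cov_step:
  assumes "covering n \<Sigma> T Sq \<pi>" "t \<in> {1..T}"
  shows "\<pi> t \<in> players n \<and> (\<exists>s'. best_response n \<Sigma> (Sq (t - 1)) (\<pi> t) s' \<and> Sq t = (Sq (t - 1))(\<pi> t := s'))"
  using assms unfolding covering_def by blast

lemma valid_Sq:
  assumes "covering n \<Sigma> T Sq \<pi>" "t \<le> T"
  shows "valid_profile n \<Sigma> (Sq t)"
  using assms(2)
proof (induction t)
  case 0 then show ?case using assms(1) by (simp add: covering_def)
next
  case (Suc t)
  then have v: "valid_profile n \<Sigma> (Sq t)" by simp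
  from cov_step[OF assms(1), of "Suc t"] Suc.prems obtain s' where
    br: "best_response n \<Sigma> (Sq t) (\<pi> (Suc t)) s'" and eq: "Sq (Suc t) = (Sq t)(\<pi> (Suc t) := s')"
    by auto
  from br have "s' \<in> \<Sigma> (\<pi> (Suc t))" by (simp add: best_response_def)
  then show ?case using v eq unfolding valid_profile_def by auto
qed

lemma stay:
  assumes "covering n \<Sigma> T Sq \<pi>" "t1 \<le> t2" "t2 \<le> T"
    "\<forall>\<tau>. t1 < \<tau> \<and> \<tau> \<le> t2 \<longrightarrow> \<pi> \<tau> \<noteq> j"
  shows "Sq t2 j = Sq t1 j"
  using assms(2-4)
proof (induction t2)
  case 0 then show ?case by simp
next
  case (Suc t)
  show ?case
  proof (cases "t1 = Suc t")
    case True then show ?thesis by simp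
  next
    case False
    then have h: "Sq t j = Sq t1 j" using Suc by auto
    from cov_step[OF assms(1), of "Suc t"] Suc.prems obtain s' where
      eq: "Sq (Suc t) = (Sq t)(\<pi> (Suc t) := s')" by auto
    have "\<pi> (Suc t) \<noteq> j" using Suc.prems False by auto
    then show ?thesis using eq h by simp
  qed
qed

lemma load_upd: "load n (S(i := s)) f \<le> load n S f + 1"
proof -
  have "{j \<in> players n. f \<in> (S(i := s)) j} \<subseteq> insert i {j \<in> players n. f \<in> S j}" by auto
  then have "load n (S(i := s)) f \<le> card (insert i {j \<in> players n. f \<in> S j})"
    unfolding load_def by (intro card_mono) auto
  also have "\<dots> \<le> load n S f + 1" unfolding load_def by (simp add: card_insert_le_m1)
  finally show ?thesis .
qed

lemma cost_br:
  assumes "covering n \<Sigma> T Sq \<pi>" "\<tau> \<in> {1..T}" "s \<in> \<Sigma> (\<pi> \<tau>)"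
  shows "cost n (Sq \<tau>) (\<pi> \<tau>) \<le> (\<Sum>f\<in>s. load n (Sq (\<tau> - 1)) f + 1)"
proof -
  from cov_step[OF assms(1,2)] obtain s' where
    br: "best_response n \<Sigma> (Sq (\<tau>-1)) (\<pi> \<tau>) s'" and eq: "Sq \<tau> = (Sq (\<tau>-1))(\<pi> \<tau> := s')" by auto
  have "cost n (Sq \<tau>) (\<pi> \<tau>) \<le> cost n ((Sq (\<tau>-1))(\<pi> \<tau> := s)) (\<pi> \<tau>)"
    using br assms(3) eq unfolding best_response_def by auto
  also have "\<dots> = (\<Sum>f\<in>s. load n ((Sq (\<tau>-1))(\<pi> \<tau> := s)) f)" by (simp add: cost_def)
  also have "\<dots> \<le> (\<Sum>f\<in>s. load n (Sq (\<tau> - 1)) f + 1)"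
    by (intro sum_mono load_upd)
  finally show ?thesis .
qed

lemma dc:
  assumes "finite E" "\<forall>i\<in>players n. S i \<subseteq> E"
  shows "(\<Sum>i\<in>players n. \<Sum>e\<in>S i. (f::_\<Rightarrow>nat) e) = (\<Sum>e\<in>E. load n S e * f e)"
proof -
  have "(\<Sum>i\<in>players n. \<Sum>e\<in>S i. f e) = (\<Sum>i\<in>players n. \<Sum>e\<in>E. if e \<in> S i then f e else 0)"
  proof (rule sum.cong[OF refl])
    fix i assume "i \<in> players n"
    then have "S i = {e\<in>E. e \<in> S i}" using assms(2) by auto
    then show "(\<Sum>e\<in>S i. f e) = (\<Sum>e\<in>E. if e \<in> S i then f e else 0)"
      using sum.inter_filter[OF assms(1), of f "\<lambda>e. e \<in> S i"] by simp
  qed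
  also have "\<dots> = (\<Sum>e\<in>E. \<Sum>i\<in>players n. if e \<in> S i then f e else 0)" by (rule sum.swap)
  also have "\<dots> = (\<Sum>e\<in>E. load n S e * f e)"
  proof (rule sum.cong[OF refl])
    fix e
    have "(\<Sum>i\<in>players n. if e \<in> S i then f e else 0) = (\<Sum>i\<in>{i\<in>players n. e \<in> S i}. f e)"
      using sum.inter_filter[of "players n" "\<lambda>_. f e" "\<lambda>i. e \<in> S i"] by simp
    then show "(\<Sum>i\<in>players n. if e \<in> S i then f e else 0) = load n S e * f e"
      by (simp add: load_def)
  qed
  finally show ?thesis .
qed

lemma pairs:
  assumes "finite A"
  shows "(card A)^2 \<le> 2 * (\<Sum>j\<in>A. card {k\<in>A. (g::_\<Rightarrow>nat) k \<le> g j})"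
proof -
  let ?C1 = "{p\<in>A\<times>A. g (snd p) \<le> g (fst p)}"
  let ?C2 = "{p\<in>A\<times>A. g (fst p) \<le> g (snd p)}"
  have s1: "(\<Sum>j\<in>A. card {k\<in>A. g k \<le> g j}) = card ?C1"
  proof -
    have "?C1 = (SIGMA j:A. {k\<in>A. g k \<le> g j})" by auto
    then show ?thesis using assms by (simp add: card_SigmaI)
  qed
  have "card ?C2 = card ?C1"
  proof (rule bij_betw_same_card)
    show "bij_betw prod.swap ?C2 ?C1"
      by (rule bij_betwI[where g = prod.swap]) auto
  qed
  have u: "A \<times> A = ?C1 \<union> ?C2"
  proof (rule set_eqI)
    fix p :: "'a \<times> 'a"
    show "p \<in> A \<times> A \<longleftrightarrow> p \<in> ?C1 \<union> ?C2"
      using nat_le_linear[of "g (fst p)" "g (snd p)"] by (cases p) blast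
  qed
  have "card (A \<times> A) \<le> card ?C1 + card ?C2" by (subst u) (rule card_Un_le)
  then have "card A * card A \<le> 2 * card ?C1" using \<open>card ?C2 = card ?C1\<close>
    by (simp add: card_cartesian_product)
  then show ?thesis using s1 by (simp add: power2_eq_square)
qed

lemma final_arith:
  fixes rho Q N Op H X S2 b :: real
  assumes "rho \<le> Q + N" "N \<le> Op" "Op > 0" "Q \<le> H + X" "X^2 \<le> Op * S2" "S2 \<le> 2 * b * (Q + N)"
    "b \<ge> 1" "H \<ge> 0" "X \<ge> 0" "N \<ge> 0"
  shows "rho / Op \<le> 2 * (H / Op) + 4 * b + 1"
proof -
  have Qb: "Q \<le> 2 * H + 4 * b * Op"
  proof (rule ccontr)
    assume c: "\<not> ?thesis"
    define K where "K = b * Op"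
    have K0: "K > 0" unfolding K_def using assms by simp
    have c2: "Q > 2 * H + 4 * K" using c unfolding K_def by simp
    have Q0: "Q \<ge> 0" using c2 assms K0 by linarith
    have q1: "Q - H > (Q + 4*K)/2" using c2 by (simp add: field_simps)
    have q0: "(Q + 4*K)/2 \<ge> 0" using Q0 K0 by simp
    have "(Q - H)^2 \<le> X^2" using assms c2 K0 by (intro power_mono) auto
    also have "\<dots> \<le> Op * S2" by (rule assms(5))
    also have "\<dots> \<le> Op * (2 * b * (Q + Op))"
    proof (rule mult_left_mono)
      have "2 * b * (Q + N) \<le> 2 * b * (Q + Op)" using assms by (intro mult_left_mono) auto
      then show "S2 \<le> 2 * b * (Q + Op)" using assms(6) by linarith
    qed (use assms in simp)
    also have "\<dots> = 2 * K * (Q + Op)" unfolding K_def by (simp add: algebra_simps)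
    finally have A: "(Q - H)^2 \<le> 2 * K * (Q + Op)" .
    have B: "((Q + 4*K)/2)^2 < (Q-H)^2" using q1 q0 by (intro power_strict_mono) auto
    have bb: "8 * b * Op * Op \<le> 16 * b * b * Op * Op"
    proof -
      have "8 * b \<le> 16 * b * b" using assms(7) by (simp add: mult_right_mono) 
      then show ?thesis using assms(3) by (simp add: mult_right_mono)
    qed
    have "2 * K * (Q + Op) \<le> ((Q + 4*K)/2)^2"
    proof -
      have "0 \<le> Q * Q" by simp
      have e1: "8*K*Op = 8*b*Op*Op" unfolding K_def by (simp add: algebra_simps)
      have e2: "16*K*K = 16*b*b*Op*Op" unfolding K_def by (simp add: algebra_simps)
      have "8 * K * Op \<le> Q*Q + 16*K*K" using bb e1 e2 \<open>0 \<le> Q*Q\<close> by linarith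
      then show ?thesis by (simp add: power2_eq_square field_simps)
    qed
    then show False using A B by linarith
  qed
  have "rho \<le> 2 * H + (4 * b + 1) * Op" using Qb assms by (simp add: algebra_simps)
  then show ?thesis using assms(3) by (simp add: field_simps)
qed

theorem lemma3:
  fixes E :: "'e set" and n T \<beta> :: nat and \<Sigma> :: "nat \<Rightarrow> 'e set set"
    and Sq :: "nat \<Rightarrow> nat \<Rightarrow> 'e set" and \<pi> :: "nat \<Rightarrow> nat" and Sstar :: "nat \<Rightarrow> 'e set"
  assumes "congestion_game E n \<Sigma>"
    and "\<beta> \<ge> 1"
    and "covering n \<Sigma> T Sq \<pi>"
    and "bounded_covering \<beta> T \<pi>"
    and "optimal_profile n \<Sigma> Sstar"
    and "social_cost n Sstar > 0"
  shows "real (rho n T Sq \<pi> Sstar) / real (social_cost n Sstar)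
           \<le> 2 * (real (H n Sq Sstar) / real (social_cost n Sstar)) + 4 * real \<beta> + 1"
proof -
  note cov = assms(3)
  define P where "P = players n"
  have finE: "finite E" using assms(1) by (simp add: congestion_game_def)
  have SqE: "Sq t i \<subseteq> E" if "t \<le> T" "i \<in> P" for t i
    using valid_Sq[OF cov that(1)] that(2) assms(1)
    unfolding valid_profile_def congestion_game_def P_def by blast
  have SsE: "Sstar i \<subseteq> E" if "i \<in> P" for i
    using assms(5) that assms(1)
    unfolding optimal_profile_def valid_profile_def congestion_game_def P_def by blast
  have SsE': "\<forall>i\<in>players n. Sstar i \<subseteq> E" using SsE P_def by simp
  define L where "L e = Max ((\<lambda>t. load n (Sq t) e) ` {0..T})" for e
  have Lge: "load n (Sq t) e \<le> L e" if "t \<le> T" for t e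
    unfolding L_def using that by (intro Max_ge) auto
  have "\<exists>t. t \<in> {0..T} \<and> load n (Sq t) e = L e" for e
  proof -
    have "L e \<in> (\<lambda>t. load n (Sq t) e) ` {0..T}" unfolding L_def by (intro Max_in) auto
    then show ?thesis by auto
  qed
  then obtain te where te: "\<And>e. te e \<le> T" "\<And>e. load n (Sq (te e)) e = L e"
    by (metis atLeastAtMost_iff)
  define A where "A e = {j\<in>P. e \<in> Sq (te e) j \<and> (\<exists>\<tau>\<in>{1..te e}. \<pi> \<tau> = j)}" for e
  define a where "a e j = Max {\<tau>\<in>{1..te e}. \<pi> \<tau> = j}" for e j
  define m where "m e = card (A e)" for e
  have finA: "finite (A e)" for e unfolding A_def P_def by simp
  have a_prop: "a e j \<in> {1..te e} \<and> \<pi> (a e j) = j \<and> (\<forall>\<tau>. a e j < \<tau> \<and> \<tau> \<le> te e \<longrightarrow> \<pi> \<tau> \<noteq> j)"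
    if "j \<in> A e" for e j
  proof -
    have ne: "{\<tau>\<in>{1..te e}. \<pi> \<tau> = j} \<noteq> {}" using that unfolding A_def by auto
    have "a e j \<in> {\<tau>\<in>{1..te e}. \<pi> \<tau> = j}" unfolding a_def by (rule Max_in) (use ne in auto)
    moreover have "\<forall>\<tau>. a e j < \<tau> \<and> \<tau> \<le> te e \<longrightarrow> \<pi> \<tau> \<noteq> j"
    proof (intro allI impI)
      fix \<tau> assume h: "a e j < \<tau> \<and> \<tau> \<le> te e"
      show "\<pi> \<tau> \<noteq> j"
      proof
        assume "\<pi> \<tau> = j"
        then have "\<tau> \<le> a e j" unfolding a_def using h by (intro Max_ge) auto
        then show False using h by simp
      qed
    qed
    ultimately show ?thesis by auto
  qed
  have a_on: "Sq (a e j) k = Sq (te e) k" if "j \<in> A e" "k \<in> A e" "a e k \<le> a e j" for e j k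
  proof -
    have "Sq (te e) k = Sq (a e j) k"
      using a_prop[OF that(2)] a_prop[OF that(1)] that(3) te(1)[of e]
      by (intro stay[OF cov]) auto
    then show ?thesis by simp
  qed
  have F3: "L e \<le> load n (Sq 0) e + m e" for e
  proof -
    have sub: "{j\<in>P. e \<in> Sq (te e) j} \<subseteq> {j\<in>P. e \<in> Sq 0 j} \<union> A e"
    proof
      fix j assume j: "j \<in> {j\<in>P. e \<in> Sq (te e) j}"
      show "j \<in> {j\<in>P. e \<in> Sq 0 j} \<union> A e"
      proof (cases "\<exists>\<tau>\<in>{1..te e}. \<pi> \<tau> = j")
        case True then show ?thesis using j unfolding A_def by auto
      next
        case False
        then have "Sq (te e) j = Sq 0 j" using te(1)[of e] by (intro stay[OF cov]) auto
        then show ?thesis using j by auto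
      qed
    qed
    have "L e = card {j\<in>P. e \<in> Sq (te e) j}" using te(2)[of e] by (simp add: load_def P_def)
    also have "\<dots> \<le> card ({j\<in>P. e \<in> Sq 0 j} \<union> A e)"
      by (rule card_mono[OF _ sub]) (simp add: finA P_def)
    also have "\<dots> \<le> card {j\<in>P. e \<in> Sq 0 j} + card (A e)" by (rule card_Un_le)
    finally show ?thesis by (simp add: load_def P_def m_def)
  qed
  have F4: "card {k\<in>A e. a e k \<le> a e j} \<le> load n (Sq (a e j)) e" if "j \<in> A e" for e j
  proof -
    have "{k\<in>A e. a e k \<le> a e j} \<subseteq> {k\<in>P. e \<in> Sq (a e j) k}"
      using a_on[OF that] unfolding A_def by auto
    then show ?thesis unfolding load_def P_def[symmetric] by (intro card_mono) (auto simp: P_def)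
  qed
  define h where "h p = load n (Sq (fst p)) (snd p)" for p
  define \<phi> where "\<phi> p = (a (fst p) (snd p), fst p)" for p
  have F5a: "(\<Sum>e\<in>E. (m e)^2) \<le> 2 * (\<Sum>e\<in>E. \<Sum>j\<in>A e. load n (Sq (a e j)) e)"
  proof -
    have "(\<Sum>e\<in>E. (m e)^2) \<le> (\<Sum>e\<in>E. 2 * (\<Sum>j\<in>A e. card {k\<in>A e. a e k \<le> a e j}))"
      unfolding m_def by (intro sum_mono pairs finA)
    also have "\<dots> \<le> (\<Sum>e\<in>E. 2 * (\<Sum>j\<in>A e. load n (Sq (a e j)) e))"
      by (intro sum_mono mult_left_mono F4) auto
    finally show ?thesis by (simp add: sum_distrib_left)
  qed
  have F5b: "(\<Sum>e\<in>E. \<Sum>j\<in>A e. load n (Sq (a e j)) e) \<le> (\<Sum>\<tau>\<in>{1..T}. cost n (Sq \<tau>) (\<pi> \<tau>))"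
  proof -
    have "(\<Sum>e\<in>E. \<Sum>j\<in>A e. load n (Sq (a e j)) e) = sum (h \<circ> \<phi>) (Sigma E A)"
      by (subst sum.Sigma[OF finE]) (auto simp: finA h_def \<phi>_def split_def)
    also have "\<dots> = sum h (\<phi> ` Sigma E A)"
    proof (rule sum.reindex[symmetric])
      show "inj_on \<phi> (Sigma E A)"
      proof (rule inj_onI)
        fix x y assume "x \<in> Sigma E A" "y \<in> Sigma E A" "\<phi> x = \<phi> y"
        then show "x = y" using a_prop unfolding \<phi>_def by (cases x, cases y) (metis SigmaE fst_conv prod.inject snd_conv)
      qed
    qed
    also have "\<dots> \<le> sum h (Sigma {1..T} (\<lambda>\<tau>. Sq \<tau> (\<pi> \<tau>)))"
    proof (rule sum_mono2)
      show "finite (Sigma {1..T} (\<lambda>\<tau>. Sq \<tau> (\<pi> \<tau>)))"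
      proof (rule finite_SigmaI)
        fix \<tau> assume "\<tau> \<in> {1..T}"
        then show "finite (Sq \<tau> (\<pi> \<tau>))"
          using SqE cov_step[OF cov] finE P_def by (meson atLeastAtMost_iff finite_subset)
      qed simp
      show "\<phi> ` Sigma E A \<subseteq> Sigma {1..T} (\<lambda>\<tau>. Sq \<tau> (\<pi> \<tau>))"
      proof
        fix y assume "y \<in> \<phi> ` Sigma E A"
        then obtain e j where ej: "e \<in> E" "j \<in> A e" "y = (a e j, e)" unfolding \<phi>_def by auto
        have "e \<in> Sq (a e j) j" using a_on[OF ej(2) ej(2)] ej(2) unfolding A_def by auto
        then show "y \<in> Sigma {1..T} (\<lambda>\<tau>. Sq \<tau> (\<pi> \<tau>))"
          using a_prop[OF ej(2)] te(1)[of e] ej(3) by auto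
      qed
    qed simp
    also have "\<dots> = (\<Sum>\<tau>\<in>{1..T}. cost n (Sq \<tau>) (\<pi> \<tau>))"
    proof -
      have "sum h (Sigma {1..T} (\<lambda>\<tau>. Sq \<tau> (\<pi> \<tau>))) = (\<Sum>\<tau>\<in>{1..T}. \<Sum>e\<in>Sq \<tau> (\<pi> \<tau>). h (\<tau>, e))"
      proof (subst sum.Sigma)
        show "finite {1..T}" by simp
        show "\<forall>\<tau>\<in>{1..T}. finite (Sq \<tau> (\<pi> \<tau>))"
          using SqE cov_step[OF cov] finE P_def by (meson atLeastAtMost_iff finite_subset)
      qed (simp add: split_def)
      then show ?thesis by (simp add: h_def cost_def)
    qed
    finally show ?thesis .
  qed
  define Q where "Q = (\<Sum>i\<in>P. \<Sum>f\<in>Sstar i. L f)"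
  define N where "N = (\<Sum>i\<in>P. card (Sstar i))"
  define G where "G i = (\<Sum>f\<in>Sstar i. L f + 1)" for i
  have F6: "(\<Sum>\<tau>\<in>{1..T}. cost n (Sq \<tau>) (\<pi> \<tau>)) \<le> \<beta> * (Q + N)"
  proof -
    have "(\<Sum>\<tau>\<in>{1..T}. cost n (Sq \<tau>) (\<pi> \<tau>)) \<le> (\<Sum>\<tau>\<in>{1..T}. G (\<pi> \<tau>))"
    proof (rule sum_mono)
      fix \<tau> assume t: "\<tau> \<in> {1..T}"
      have pi: "\<pi> \<tau> \<in> P" using cov_step[OF cov t] P_def by simp
      have "Sstar (\<pi> \<tau>) \<in> \<Sigma> (\<pi> \<tau>)" using assms(5) pi
        unfolding optimal_profile_def valid_profile_def P_def by blast
      from cost_br[OF cov t this]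
      have "cost n (Sq \<tau>) (\<pi> \<tau>) \<le> (\<Sum>f\<in>Sstar (\<pi> \<tau>). load n (Sq (\<tau> - 1)) f + 1)" .
      also have "\<dots> \<le> G (\<pi> \<tau>)" unfolding G_def using t by (intro sum_mono add_right_mono Lge) auto
      finally show "cost n (Sq \<tau>) (\<pi> \<tau>) \<le> G (\<pi> \<tau>)" .
    qed
    also have "\<dots> = (\<Sum>i\<in>P. \<Sum>\<tau>\<in>{\<tau>\<in>{1..T}. \<pi> \<tau> = i}. G (\<pi> \<tau>))"
      by (rule sum.group[symmetric]) (use cov_step[OF cov] P_def in auto)
    also have "\<dots> = (\<Sum>i\<in>P. card {\<tau>\<in>{1..T}. \<pi> \<tau> = i} * G i)"
      by (intro sum.cong refl) simp
    also have "\<dots> \<le> (\<Sum>i\<in>P. \<beta> * G i)"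
      using assms(4) unfolding bounded_covering_def by (intro sum_mono mult_right_mono) auto
    also have "\<dots> = \<beta> * (\<Sum>i\<in>P. G i)" by (simp add: sum_distrib_left)
    also have "(\<Sum>i\<in>P. G i) = Q + N" unfolding G_def Q_def N_def sum.distrib by simp
    finally show ?thesis .
  qed
  define ns where "ns e = load n Sstar e" for e
  have Qe: "Q = (\<Sum>e\<in>E. ns e * L e)" unfolding Q_def P_def ns_def by (rule dc[OF finE SsE'])
  have He: "H n Sq Sstar = (\<Sum>e\<in>E. ns e * load n (Sq 0) e)"
    unfolding H_def ns_def by (rule dc[OF finE SsE'])
  have Ne: "N = (\<Sum>e\<in>E. ns e)"
    using dc[OF finE SsE', of "\<lambda>_. 1"] unfolding N_def P_def ns_def by simp
  have Oe: "social_cost n Sstar = (\<Sum>e\<in>E. (ns e)^2)"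
    using dc[OF finE SsE', of "\<lambda>e. load n Sstar e"]
    unfolding social_cost_def cost_def ns_def by (simp add: power2_eq_square)
  define X where "X = (\<Sum>e\<in>E. ns e * m e)"
  have F7: "Q \<le> H n Sq Sstar + X"
    unfolding Qe He X_def sum.distrib[symmetric]
    by (intro sum_mono) (metis F3 add_mult_distrib2 mult_le_mono2)
  have F8: "N \<le> social_cost n Sstar"
    unfolding Ne Oe by (intro sum_mono) (simp add: power2_eq_square)
  have CS: "(real X)^2 \<le> real (social_cost n Sstar) * real (\<Sum>e\<in>E. (m e)^2)"
  proof -
    have "(real X)^2 = (\<Sum>e\<in>E. real (ns e) * real (m e))^2" unfolding X_def by simp
    also have "\<dots> \<le> (\<Sum>e\<in>E. (real (ns e))^2) * (\<Sum>e\<in>E. (real (m e))^2)"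
      by (rule Cauchy_Schwarz_ineq_sum)
    finally show ?thesis unfolding Oe by simp
  qed
  have F9: "rho n T Sq \<pi> Sstar \<le> Q + N"
  proof -
    have "rho n T Sq \<pi> Sstar \<le> (\<Sum>i\<in>P. G i)"
      unfolding rho_def G_def P_def[symmetric]
    proof (intro sum_mono add_right_mono Lge)
      fix i assume i: "i \<in> P"
      obtain t0 where "t0 \<in> {1..T}" "\<pi> t0 = i" using cov i unfolding covering_def P_def by blast
      then have "{t\<in>{1..T}. \<pi> t = i} \<noteq> {}" by blast
      then have "last_move T \<pi> i \<in> {1..T}" unfolding last_move_def
        using Max_in[of "{t\<in>{1..T}. \<pi> t = i}"] by auto
      then show "last_move T \<pi> i - 1 \<le> T" by auto
    qed
    also have "\<dots> = Q + N" unfolding G_def Q_def N_def sum.distrib by simp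
    finally show ?thesis .
  qed
  have S2: "real (\<Sum>e\<in>E. (m e)^2) \<le> 2 * real \<beta> * (real Q + real N)"
  proof -
    have "(\<Sum>e\<in>E. (m e)^2) \<le> 2 * (\<beta> * (Q + N))" using F5a F5b F6 by linarith
    then have "real (\<Sum>e\<in>E. (m e)^2) \<le> real (2 * (\<beta> * (Q + N)))" by (simp only: of_nat_le_iff)
    then show ?thesis by simp
  qed
  have pos: "real (social_cost n Sstar) > 0" using assms(6) by simp
  show ?thesis
  proof (rule final_arith[of _ "real Q" "real N" _ _ "real X" "real (\<Sum>e\<in>E. (m e)^2)"])
    show "real (rho n T Sq \<pi> Sstar) \<le> real Q + real N" using F9 by (metis of_nat_add of_nat_le_iff)
    show "real N \<le> real (social_cost n Sstar)" using F8 by (rule of_nat_mono)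
    show "real (social_cost n Sstar) > 0" by (rule pos)
    show "real Q \<le> real (H n Sq Sstar) + real X" using F7 by (metis of_nat_add of_nat_le_iff)
    show "(real X)^2 \<le> real (social_cost n Sstar) * real (\<Sum>e\<in>E. (m e)^2)" by (rule CS)
    show "real (\<Sum>e\<in>E. (m e)^2) \<le> 2 * real \<beta> * (real Q + real N)" by (rule S2)
    show "1 \<le> real \<beta>" using assms(2) by (metis of_nat_1 of_nat_le_iff)
    show "0 \<le> real (H n Sq Sstar)" by (rule of_nat_0_le_iff)
    show "0 \<le> real X" by (rule of_nat_0_le_iff)
    show "0 \<le> real N" by (rule of_nat_0_le_iff)
  qed
qed

end
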